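(* For $n\ge6$ let $H_n$ be the graph on nodes $\{1,\dots,n\}$ whose edges are all ten pairs in $\{1,2,3,4,5\}$ together with the path edges $\{5,6\},\{6,7\},\dots,\{n-1,n\}$. Then $C(3)=\frac{30}{n+28}$ for $n\ge6$, $C(4)=\frac{80}{n+95}$ for $n\ge7$, and $C(5)=\frac{125}{n+203}$ for $n\ge8$. Consequently, for $n\ge8$, $C(4)\ge C(5)$ if and only if $n\le97$, with equality if and only if $n=97$, where $C(4)=C(5)=\tfrac{5}{12}$; and for $n\ge7$, $C(3)\ge C(4)$ if and only if $n\le12$.
   Context: For $b\ge3$, a $b$-clique is a set of $b$ pairwise adjacent nodes; a $b$-spanning tree in $G$ is a (not necessarily induced) subgraph of $G$ that is a tree on exactly $b$ nodes; and $C(b)=b^{b-2}\times(\#b\text{-cliques in }G)/(\#b\text{-spanning trees in }G)$. *)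

theory Defs
  imports Complex_Main
begin

definition simple_graph :: "'a set \<Rightarrow> 'a set set \<Rightarrow> bool" where
  "simple_graph V E \<longleftrightarrow> finite V \<and> (\<forall>e\<in>E. card e = 2 \<and> e \<subseteq> V)"

definition cliques :: "'a set \<Rightarrow> 'a set set \<Rightarrow> nat \<Rightarrow> 'a set set" where
  "cliques V E b = {S. S \<subseteq> V \<and> card S = b \<and> (\<forall>x\<in>S. \<forall>y\<in>S. x \<noteq> y \<longrightarrow> {x, y} \<in> E)}"

definition connected_on :: "'a set \<Rightarrow> 'a set set \<Rightarrow> bool" where
  "connected_on S F \<longleftrightarrow> (\<forall>x\<in>S. \<forall>y\<in>S. (\<lambda>u v. {u, v} \<in> F)\<^sup>*\<^sup>* x y)"

definition has_cycle :: "'a set \<Rightarrow> 'a set set \<Rightarrow> bool" where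
  "has_cycle S F \<longleftrightarrow> (\<exists>vs. length vs \<ge> 3 \<and> distinct vs \<and> set vs \<subseteq> S \<and>
      (\<forall>i. Suc i < length vs \<longrightarrow> {vs ! i, vs ! Suc i} \<in> F) \<and> {last vs, hd vs} \<in> F)"

definition is_tree :: "'a set \<Rightarrow> 'a set set \<Rightarrow> bool" where
  "is_tree S F \<longleftrightarrow> S \<noteq> {} \<and> connected_on S F \<and> \<not> has_cycle S F"

definition span_trees :: "'a set \<Rightarrow> 'a set set \<Rightarrow> nat \<Rightarrow> ('a set \<times> 'a set set) set" where
  "span_trees V E b = {(S, F). S \<subseteq> V \<and> F \<subseteq> E \<and> (\<forall>e\<in>F. e \<subseteq> S) \<and> card S = b \<and> is_tree S F}"

definition C_ratio :: "'a set \<Rightarrow> 'a set set \<Rightarrow> nat \<Rightarrow> real" where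
  "C_ratio V E b = real (b ^ (b - 2)) * real (card (cliques V E b)) / real (card (span_trees V E b))"

definition H_V :: "nat \<Rightarrow> nat set" where
  "H_V n = {1..n}"

definition H_E :: "nat \<Rightarrow> nat set set" where
  "H_E n = {{i, j} | i j. i \<in> {1..5} \<and> j \<in> {1..5} \<and> i \<noteq> j}
         \<union> {{i, Suc i} | i. 5 \<le> i \<and> Suc i \<le> n}"

end

theory Submission
  imports Defs
begin

abbreviation adj :: "'a set set \<Rightarrow> 'a \<Rightarrow> 'a \<Rightarrow> bool" where
  "adj F \<equiv> (\<lambda>u v. {u, v} \<in> F)"

lemma rt_sym: "(adj F)\<^sup>*\<^sup>* x y \<Longrightarrow> (adj F)\<^sup>*\<^sup>* y x"
proof (induction rule: rtranclp.induct)
  case (rtrancl_refl a) then show ?case by simp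
next
  case (rtrancl_into_rtrancl a b c)
  have "adj F c b" using rtrancl_into_rtrancl.hyps(2) by (simp add: insert_commute)
  then show ?case using rtrancl_into_rtrancl.IH by (rule converse_rtranclp_into_rtranclp)
qed

lemma cyc_nb:
  assumes L: "length vs \<ge> 3" and d: "distinct vs"
    and c: "\<forall>i. Suc i < length vs \<longrightarrow> {vs ! i, vs ! Suc i} \<in> F"
    and cl: "{last vs, hd vs} \<in> F" and j: "j < length vs"
  shows "\<exists>a b. a \<noteq> b \<and> a \<in> set vs \<and> b \<in> set vs \<and> {vs!j, a} \<in> F \<and> {vs!j, b} \<in> F"
proof -
  define n where "n = length vs"
  have ne: "vs \<noteq> []" using L by auto
  have hd: "hd vs = vs ! 0" using ne by (simp add: hd_conv_nth)
  have lst: "last vs = vs ! (n - 1)" using ne by (simp add: last_conv_nth n_def)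
  have inj: "\<And>p q. p < n \<Longrightarrow> q < n \<Longrightarrow> p \<noteq> q \<Longrightarrow> vs!p \<noteq> vs!q"
    using d by (simp add: n_def nth_eq_iff_index_eq)
  consider "j = 0" | "j = n - 1" | "0 < j \<and> j < n - 1" using j n_def by linarith
  then show ?thesis
  proof cases
    case 1
    have "vs!1 \<noteq> vs!(n-1)" using inj[of 1 "n-1"] L n_def by auto
    moreover have "{vs!j, vs!1} \<in> F" using c 1 L by auto
    moreover have "{vs!j, vs!(n-1)} \<in> F" using cl 1 hd lst by (simp add: insert_commute)
    moreover have "vs!1 \<in> set vs" "vs!(n-1) \<in> set vs" using L n_def by auto
    ultimately show ?thesis by blast
  next
    case 2
    have "n - 2 < n" "0 < n" "n - 2 \<noteq> 0" using L n_def by auto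
    hence "vs!(n-2) \<noteq> vs!0" using inj[of "n-2" 0] by blast
    moreover have "{vs!j, vs!(n-2)} \<in> F" using c[rule_format, of "n-2"] 2 L n_def
      by (auto simp: insert_commute Suc_diff_Suc numeral_2_eq_2)
    moreover have "{vs!j, vs!0} \<in> F" using cl 2 hd lst by simp
    moreover have "vs!(n-2) \<in> set vs" "vs!0 \<in> set vs" using L n_def by (auto intro!: nth_mem)
    ultimately show ?thesis by blast
  next
    case 3
    have "j - 1 < n" "j + 1 < n" "j - 1 \<noteq> j + 1" using 3 by auto
    hence "vs!(j-1) \<noteq> vs!(j+1)" using inj[of "j-1" "j+1"] by blast
    moreover have "{vs!j, vs!(j-1)} \<in> F" using c[rule_format, of "j-1"] 3 n_def
      by (auto simp: insert_commute)
    moreover have "{vs!j, vs!(j+1)} \<in> F" using c[rule_format, of j] 3 n_def by auto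
    moreover have "vs!(j-1) \<in> set vs" "vs!(j+1) \<in> set vs" using 3 n_def by auto
    ultimately show ?thesis by blast
  qed
qed

lemma leaf_exists:
  assumes fin: "finite S" and E: "\<forall>e\<in>F. card e = 2 \<and> e \<subseteq> S" and ne: "F \<noteq> {}"
    and ac: "\<not> has_cycle S F"
  shows "\<exists>u v. {u,v} \<in> F \<and> (\<forall>w. {w,v} \<in> F \<longrightarrow> w = u)"
proof -
  define P where "P = {vs. set vs \<subseteq> S \<and> distinct vs \<and> length vs \<ge> 2 \<and>
     (\<forall>i. Suc i < length vs \<longrightarrow> {vs!i, vs!Suc i} \<in> F)}"
  have finP: "finite P"
    by (rule finite_subset[OF _ finite_subset_distinct[OF fin]]) (auto simp: P_def)
  obtain e where e: "e \<in> F" using ne by auto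
  have "card e = 2" using E e by blast
  then obtain a b where ab: "e = {a,b}" "a \<noteq> b" by (auto simp: card_2_iff)
  have "\<forall>i. Suc i < length [a,b] \<longrightarrow> {[a,b]!i, [a,b]!Suc i} \<in> F"
  proof (intro allI impI)
    fix i assume "Suc i < length [a,b]" hence "i = 0" by simp
    then show "{[a,b]!i, [a,b]!Suc i} \<in> F" using ab e by simp
  qed
  moreover have "set [a,b] \<subseteq> S" using ab e E by auto
  ultimately have "[a,b] \<in> P" using ab unfolding P_def by simp
  hence Pne: "P \<noteq> {}" by auto
  define m where "m = Max (length ` P)"
  have "m \<in> length ` P" using Max_in[of "length ` P"] finP Pne m_def by auto
  then obtain vs where vs: "vs \<in> P" "length vs = m" by auto
  have mx: "\<And>ws. ws \<in> P \<Longrightarrow> length ws \<le> m" using finP m_def by auto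
  have L2: "length vs \<ge> 2" and dv: "distinct vs" and sv: "set vs \<subseteq> S"
    and cv: "\<forall>i. Suc i < length vs \<longrightarrow> {vs!i, vs!Suc i} \<in> F" using vs(1) by (auto simp: P_def)
  define v where "v = vs!0"
  define u where "u = vs!1"
  have uv: "{u,v} \<in> F" using cv L2 by (auto simp: u_def v_def insert_commute)
  have "\<forall>w. {w,v} \<in> F \<longrightarrow> w = u"
  proof (intro allI impI, rule ccontr)
    fix w assume wv: "{w,v} \<in> F" and wu: "w \<noteq> u"
    have "w \<noteq> v"
    proof
      assume "w = v" hence "card {w,v} = 1" by simp
      thus False using E wv by fastforce
    qed
    have wS: "w \<in> S" using E wv by auto
    show False
    proof (cases "w \<in> set vs")
      case False
      have "w # vs \<in> P" unfolding P_def
      proof (intro CollectI conjI allI impI)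
        fix i assume "Suc i < length (w # vs)"
        then show "{(w#vs)!i, (w#vs)!Suc i} \<in> F"
          using cv wv by (cases i) (auto simp: v_def)
      qed (use False dv sv wS L2 in auto)
      then show False using mx vs(2) by fastforce
    next
      case True
      then obtain j where j: "j < length vs" "vs!j = w" by (auto simp: in_set_conv_nth)
      have "j \<noteq> 0" using j \<open>w \<noteq> v\<close> v_def by (metis)
      moreover have "j \<noteq> 1" using j wu u_def by auto
      ultimately have j2: "j \<ge> 2" by auto
      define cs where "cs = take (Suc j) vs"
      have lc: "length cs = Suc j" using j by (simp add: cs_def)
      have "has_cycle S F" unfolding has_cycle_def
      proof (intro exI[of _ cs] conjI allI impI)
        show "3 \<le> length cs" using lc j2 by simp
        show "distinct cs" using dv by (simp add: cs_def)
        show "set cs \<subseteq> S" using sv set_take_subset[of "Suc j" vs] by (auto simp: cs_def)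
        fix i assume "Suc i < length cs"
        then show "{cs!i, cs!Suc i} \<in> F" using cv lc j by (auto simp: cs_def)
      next
        have lw: "last cs = w" using lc j by (simp add: cs_def take_Suc_conv_app_nth)
        have "vs \<noteq> []" using j by auto
        moreover from this have "hd cs = v" by (simp add: cs_def hd_conv_nth v_def)
        ultimately show "{last cs, hd cs} \<in> F" using wv lw by simp
      qed
      then show False using ac by simp
    qed
  qed
  then show ?thesis using uv by blast
qed

lemma leaf_conn:
  assumes conn: "connected_on S F" and uniq: "\<forall>w. {w,v} \<in> F \<longrightarrow> w = u"
  shows "connected_on (S - {v}) (F - {{u,v}})"
proof -
  let ?F = "F - {{u,v}}"
  have key: "(adj F)\<^sup>*\<^sup>* x z \<Longrightarrow> x \<noteq> v \<Longrightarrow>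
     (z \<noteq> v \<longrightarrow> (adj ?F)\<^sup>*\<^sup>* x z) \<and> (z = v \<longrightarrow> (adj ?F)\<^sup>*\<^sup>* x u)" for x z
  proof (induction rule: rtranclp.induct)
    case (rtrancl_refl a) then show ?case by simp
  next
    case (rtrancl_into_rtrancl a b c)
    have IH: "(b \<noteq> v \<longrightarrow> (adj ?F)\<^sup>*\<^sup>* a b) \<and> (b = v \<longrightarrow> (adj ?F)\<^sup>*\<^sup>* a u)"
      using rtrancl_into_rtrancl.IH rtrancl_into_rtrancl.prems by blast
    have e: "{b,c} \<in> F" using rtrancl_into_rtrancl.hyps(2) .
    show ?case
    proof (cases "c = v")
      case True
      show ?thesis
      proof (cases "b = v")
        case True then show ?thesis using IH \<open>c = v\<close> by simp
      next
        case False
        then have "b = u" using uniq e \<open>c = v\<close> by blast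
        then show ?thesis using IH False \<open>c = v\<close> by simp
      qed
    next
      case False
      show ?thesis
      proof (cases "b = v")
        case True
        then have "{c,v} \<in> F" using e by (simp add: insert_commute)
        then have "c = u" using uniq by blast
        then show ?thesis using IH True False by simp
      next
        case bF: False
        have "{b,c} \<noteq> {u,v}" using bF False by (auto simp: doubleton_eq_iff)
        hence "adj ?F b c" using e by simp
        then show ?thesis using IH bF False by (meson rtranclp.rtrancl_into_rtrancl)
      qed
    qed
  qed
  show ?thesis unfolding connected_on_def
  proof (intro ballI)
    fix x y assume "x \<in> S - {v}" "y \<in> S - {v}"
    then show "(adj ?F)\<^sup>*\<^sup>* x y" using key[of x y] conn unfolding connected_on_def by auto
  qed
qed

lemma cycle_mono: assumes "has_cycle S' F'" "S' \<subseteq> S" "F' \<subseteq> F" shows "has_cycle S F"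
proof -
  obtain vs where "length vs \<ge> 3 \<and> distinct vs \<and> set vs \<subseteq> S' \<and>
      (\<forall>i. Suc i < length vs \<longrightarrow> {vs ! i, vs ! Suc i} \<in> F') \<and> {last vs, hd vs} \<in> F'"
    using assms(1) unfolding has_cycle_def by blast
  then show ?thesis unfolding has_cycle_def using assms(2,3) by blast
qed

lemma leaf_cycle:
  assumes uniq: "\<forall>w. {w,v} \<in> F \<longrightarrow> w = u" and hc: "has_cycle S F"
  shows "has_cycle (S - {v}) (F - {{u,v}})"
proof -
  obtain vs where L: "length vs \<ge> 3" and d: "distinct vs" and s: "set vs \<subseteq> S"
    and c: "\<forall>i. Suc i < length vs \<longrightarrow> {vs ! i, vs ! Suc i} \<in> F"
    and cl: "{last vs, hd vs} \<in> F" using hc unfolding has_cycle_def by blast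
  have nv: "v \<notin> set vs"
  proof
    assume "v \<in> set vs"
    then obtain j where j: "j < length vs" "vs!j = v" by (auto simp: in_set_conv_nth)
    from cyc_nb[OF L d c cl j(1)] obtain a b where
      ab: "a \<noteq> b" "{v,a} \<in> F" "{v,b} \<in> F" using j(2) by auto
    have "{a,v} \<in> F" "{b,v} \<in> F" using ab by (simp_all add: insert_commute)
    then have "a = u" "b = u" using uniq by blast+
    then show False using ab(1) by simp
  qed
  have ne: "vs \<noteq> []" using L by auto
  show ?thesis unfolding has_cycle_def
  proof (intro exI[of _ vs] conjI allI impI)
    show "set vs \<subseteq> S - {v}" using s nv by auto
    fix i assume i: "Suc i < length vs"
    have "vs!i \<in> set vs" "vs!Suc i \<in> set vs" using i by auto
    then have "v \<notin> {vs ! i, vs ! Suc i}" using nv by auto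
    then have "{vs ! i, vs ! Suc i} \<noteq> {u, v}" by auto
    then show "{vs ! i, vs ! Suc i} \<in> F - {{u, v}}" using c i by auto
  next
    have "last vs \<in> set vs" "hd vs \<in> set vs" using ne by auto
    then have "v \<notin> {last vs, hd vs}" using nv by auto
    then have "{last vs, hd vs} \<noteq> {u, v}" by auto
    then show "{last vs, hd vs} \<in> F - {{u, v}}" using cl by auto
  qed (use L d in auto)
qed

lemma rt_empty: "(adj F)\<^sup>*\<^sup>* x y \<Longrightarrow> F = {} \<Longrightarrow> x = y"
  by (induction rule: rtranclp.induct) auto

lemma edge_remove_ok:
  assumes E: "\<forall>e\<in>F. card e = 2 \<and> e \<subseteq> S" and uniq: "\<forall>w. {w,v} \<in> F \<longrightarrow> w = u"
  shows "\<forall>e\<in>F - {{u,v}}. card e = 2 \<and> e \<subseteq> S - {v}"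
proof
  fix e assume e: "e \<in> F - {{u,v}}"
  then have c: "card e = 2" and sub: "e \<subseteq> S" using E by auto
  obtain a b where ab: "e = {a,b}" "a \<noteq> b" using c by (auto simp: card_2_iff)
  have "v \<notin> e"
  proof
    assume "v \<in> e"
    then have "e = {a,v} \<or> e = {b,v}" using ab by auto
    then show False using uniq e ab by (auto simp: insert_commute)
  qed
  then show "card e = 2 \<and> e \<subseteq> S - {v}" using c sub by auto
qed

lemma tree_card:
  "finite S \<Longrightarrow> \<forall>e\<in>F. card e = 2 \<and> e \<subseteq> S \<Longrightarrow> is_tree S F \<Longrightarrow> card F + 1 = card S"
proof (induction "card S" arbitrary: S F rule: less_induct)
  case less
  note E = less.prems(2)
  have ne: "S \<noteq> {}" and conn: "connected_on S F" and ac: "\<not> has_cycle S F"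
    using less.prems(3) unfolding is_tree_def by auto
  have finF: "finite F"
    by (rule finite_subset[of F "Pow S"]) (use E less.prems(1) in auto)
  show ?case
  proof (cases "card S = 1")
    case True
    then obtain x where Sx: "S = {x}" by (auto simp: card_1_singleton_iff)
    have "F = {}"
    proof (rule ccontr)
      assume "F \<noteq> {}" then obtain e where "e \<in> F" by auto
      then have "card e = 2" "e \<subseteq> {x}" using E Sx by blast+
      then show False using card_mono[of "{x}" e] by simp
    qed
    then show ?thesis using True by simp
  next
    case False
    have "card S \<noteq> 0" using ne less.prems(1) by simp
    then have "card S \<ge> 2" using False by linarith
    obtain x where x: "x \<in> S" using ne by auto
    have "S - {x} \<noteq> {}"
    proof
      assume "S - {x} = {}" hence "S = {x}" using x by auto
      hence "card S = 1" by simp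
      thus False using \<open>card S \<ge> 2\<close> by simp
    qed
    then obtain y where "y \<in> S - {x}" by blast
    then have xy: "x \<in> S" "y \<in> S" "x \<noteq> y" using x by auto
    have rxy: "(adj F)\<^sup>*\<^sup>* x y" using conn xy(1,2) unfolding connected_on_def by blast
    have "F \<noteq> {}"
    proof
      assume "F = {}" with rxy have "x = y" by (rule rt_empty)
      thus False using xy(3) by simp
    qed
    from leaf_exists[OF less.prems(1) E this ac] obtain u v where
      uv: "{u,v} \<in> F" and uniq: "\<forall>w. {w,v} \<in> F \<longrightarrow> w = u" by blast
    have vu: "v \<noteq> u"
    proof
      assume "v = u" hence "card {u,v} = 1" by simp
      moreover have "card {u,v} = 2" using E uv by blast
      ultimately show False by simp
    qed
    have vS: "v \<in> S" and uS: "u \<in> S" using E uv by auto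
    let ?S = "S - {v}" and ?F = "F - {{u,v}}"
    have E': "\<forall>e\<in>?F. card e = 2 \<and> e \<subseteq> ?S" by (rule edge_remove_ok[OF E uniq])
    have "is_tree ?S ?F" unfolding is_tree_def
    proof (intro conjI)
      show "?S \<noteq> {}" using uS vu by auto
      show "connected_on ?S ?F" by (rule leaf_conn[OF conn uniq])
      show "\<not> has_cycle ?S ?F" using ac cycle_mono[of ?S ?F S F] by blast
    qed
    moreover have "card ?S < card S" by (rule card_Diff1_less[OF less.prems(1) vS])
    moreover have "finite ?S" using less.prems(1) by simp
    ultimately have "card ?F + 1 = card ?S" using less.hyps[of ?S ?F] E' by blast
    moreover have "card ?F = card F - 1" using uv finF by simp
    moreover have "card ?S = card S - 1" using vS by simp
    moreover have "0 < card F" using uv finF by (auto simp: card_gt_0_iff)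
    ultimately show ?thesis by linarith
  qed
qed

lemma handshake:
  assumes fS: "finite S" and fF: "finite F" and sub: "\<forall>e\<in>F. e \<subseteq> S"
  shows "(\<Sum>x\<in>S. card {e\<in>F. x \<in> e}) = (\<Sum>e\<in>F. card e)"
proof -
  have "(\<Sum>x\<in>S. card {e\<in>F. x \<in> e}) = (\<Sum>x\<in>S. \<Sum>e\<in>F. if x \<in> e then 1 else 0)"
  proof (rule sum.cong)
    fix x
    have "{e\<in>F. x \<in> e} = F \<inter> {e. x \<in> e}" by auto
    then show "card {e\<in>F. x \<in> e} = (\<Sum>e\<in>F. if x \<in> e then 1 else 0)"
      by (simp add: sum.If_cases fF)
  qed simp
  also have "\<dots> = (\<Sum>e\<in>F. \<Sum>x\<in>S. if x \<in> e then 1 else 0)" by (rule sum.swap)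
  also have "\<dots> = (\<Sum>e\<in>F. card e)"
  proof (rule sum.cong)
    fix e assume e: "e \<in> F"
    have "(\<Sum>x\<in>S. if x \<in> e then 1 else 0) = card (S \<inter> {x. x \<in> e})"
      by (simp add: sum.If_cases fS)
    also have "S \<inter> {x. x \<in> e} = e" using sub e by auto
    finally show "(\<Sum>x\<in>S. if x \<in> e then 1 else 0) = card e" .
  qed simp
  finally show ?thesis .
qed

lemma tree_of_card:
  "finite S \<Longrightarrow> \<forall>e\<in>F. card e = 2 \<and> e \<subseteq> S \<Longrightarrow> S \<noteq> {} \<Longrightarrow> connected_on S F
    \<Longrightarrow> card F + 1 = card S \<Longrightarrow> \<not> has_cycle S F"
proof (induction "card S" arbitrary: S F rule: less_induct)
  case less
  note fS = less.prems(1) and E = less.prems(2) and ne = less.prems(3) and conn = less.prems(4)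
    and cF = less.prems(5)
  have finF: "finite F"
    by (rule finite_subset[of F "Pow S"]) (use E fS in auto)
  show ?case
  proof (cases "card S = 1")
    case True
    then have "F = {}" using cF finF by simp
    show ?thesis
    proof
      assume "has_cycle S F"
      then obtain vs where "length vs \<ge> 3" "\<forall>i. Suc i < length vs \<longrightarrow> {vs ! i, vs ! Suc i} \<in> F"
        unfolding has_cycle_def by blast
      then have "{vs ! 0, vs ! Suc 0} \<in> F" by auto
      then show False using \<open>F = {}\<close> by simp
    qed
  next
    case False
    have "card S \<noteq> 0" using ne fS by simp
    then have S2: "card S \<ge> 2" using False by linarith
    have hs: "(\<Sum>x\<in>S. card {e\<in>F. x \<in> e}) = 2 * card F"
    proof -
      have "(\<Sum>x\<in>S. card {e\<in>F. x \<in> e}) = (\<Sum>e\<in>F. card e)"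
        by (rule handshake[OF fS finF]) (use E in blast)
      also have "\<dots> = (\<Sum>e\<in>F. 2)" by (rule sum.cong) (use E in auto)
      finally show ?thesis by simp
    qed
    have "\<exists>v\<in>S. card {e\<in>F. v \<in> e} < 2"
    proof (rule ccontr)
      assume "\<not> ?thesis"
      then have "\<forall>x\<in>S. 2 \<le> card {e\<in>F. x \<in> e}" by auto
      then have "(\<Sum>x\<in>S. (2::nat)) \<le> (\<Sum>x\<in>S. card {e\<in>F. x \<in> e})" by (intro sum_mono) blast
      then have "2 * card S \<le> 2 * card F" using hs by simp
      then show False using cF by simp
    qed
    then obtain v where vS: "v \<in> S" and dv: "card {e\<in>F. v \<in> e} < 2" by blast
    have "S - {v} \<noteq> {}"
    proof
      assume "S - {v} = {}" hence "S = {v}" using vS by auto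
      hence "card S = 1" by simp
      thus False using S2 by simp
    qed
    then obtain y where y: "y \<in> S" "y \<noteq> v" by blast
    have rvy: "(adj F)\<^sup>*\<^sup>* v y" using conn vS y(1) unfolding connected_on_def by blast
    obtain u where vu: "{v,u} \<in> F"
    proof (rule converse_rtranclpE[OF rvy])
      assume "v = y" thus thesis using y(2) by simp
    next
      fix w assume "{v,w} \<in> F" "(adj F)\<^sup>*\<^sup>* w y"
      thus thesis using that by blast
    qed
    have fD: "finite {e\<in>F. v \<in> e}" using finF by simp
    have "card {e\<in>F. v \<in> e} \<le> Suc 0" using dv by simp
    then have one: "\<forall>a\<in>{e\<in>F. v \<in> e}. \<forall>b\<in>{e\<in>F. v \<in> e}. a = b"
      using card_le_Suc0_iff_eq[OF fD] by blast
    have uniq: "\<forall>w. {w,v} \<in> F \<longrightarrow> w = u"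
    proof (intro allI impI)
      fix w assume "{w,v} \<in> F"
      then have "{w,v} \<in> {e\<in>F. v \<in> e}" by simp
      moreover have "{v,u} \<in> {e\<in>F. v \<in> e}" using vu by simp
      ultimately have "{w,v} = {v,u}" by (rule one[rule_format])
      then have "w = v \<and> v = u \<or> w = u \<and> v = v" by (simp only: doubleton_eq_iff)
      then show "w = u" by auto
    qed
    have uv: "{u,v} \<in> F" using vu by (simp add: insert_commute)
    have vnu: "v \<noteq> u"
    proof
      assume "v = u" hence "card {u,v} = 1" by simp
      moreover have "card {u,v} = 2" using E uv by blast
      ultimately show False by simp
    qed
    have uS: "u \<in> S" using E uv by blast
    let ?S = "S - {v}" and ?F = "F - {{u,v}}"
    have E': "\<forall>e\<in>?F. card e = 2 \<and> e \<subseteq> ?S" by (rule edge_remove_ok[OF E uniq])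
    have conn': "connected_on ?S ?F" by (rule leaf_conn[OF conn uniq])
    have ne': "?S \<noteq> {}" using uS vnu by auto
    have lt: "card ?S < card S" by (rule card_Diff1_less[OF fS vS])
    have "card ?F = card F - 1" using uv finF by simp
    moreover have "card ?S = card S - 1" using vS by simp
    moreover have "0 < card F" using uv finF by (auto simp: card_gt_0_iff)
    ultimately have cF': "card ?F + 1 = card ?S" using cF by linarith
    have fS': "finite ?S" using fS by simp
    have "\<not> has_cycle ?S ?F" by (rule less.hyps[OF lt fS' E' ne' conn' cF'])
    then show ?thesis
    proof (intro notI)
      assume "has_cycle S F"
      from leaf_cycle[OF uniq this] show False using \<open>\<not> has_cycle ?S ?F\<close> by simp
    qed
  qed
qed

lemma span_char:
  assumes b2: "b \<ge> 2" and EV: "\<forall>e\<in>E. card e = 2 \<and> e \<subseteq> V"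
  shows "(S,F) \<in> span_trees V E b \<longleftrightarrow>
     F \<subseteq> E \<and> S = \<Union>F \<and> card F + 1 = b \<and> card (\<Union>F) = b \<and> connected_on (\<Union>F) F"
proof
  assume "(S,F) \<in> span_trees V E b"
  then have SV: "S \<subseteq> V" and FE: "F \<subseteq> E" and FS: "\<forall>e\<in>F. e \<subseteq> S" and cS: "card S = b"
    and tr: "is_tree S F" unfolding span_trees_def by auto
  have fS: "finite S" using cS b2 card.infinite by fastforce
  have conn: "connected_on S F" using tr unfolding is_tree_def by blast
  have E2: "\<forall>e\<in>F. card e = 2 \<and> e \<subseteq> S" using FE FS EV by blast
  have sub1: "\<Union>F \<subseteq> S" using FS by blast
  have sub2: "S \<subseteq> \<Union>F"
  proof
    fix x assume x: "x \<in> S"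
    have "S - {x} \<noteq> {}"
    proof
      assume "S - {x} = {}" hence "S = {x}" using x by auto
      hence "card S = 1" by simp
      thus False using cS b2 by simp
    qed
    then obtain y where y: "y \<in> S" "y \<noteq> x" by blast
    have rxy: "(adj F)\<^sup>*\<^sup>* x y" using conn x y(1) unfolding connected_on_def by blast
    show "x \<in> \<Union>F"
    proof (rule converse_rtranclpE[OF rxy])
      assume "x = y" thus ?thesis using y(2) by simp
    next
      fix w assume "{x,w} \<in> F" thus ?thesis by blast
    qed
  qed
  have SU: "S = \<Union>F" using sub1 sub2 by blast
  have "card F + 1 = card S" by (rule tree_card[OF fS E2 tr])
  then show "F \<subseteq> E \<and> S = \<Union>F \<and> card F + 1 = b \<and> card (\<Union>F) = b \<and> connected_on (\<Union>F) F"
    using FE SU cS conn by simp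
next
  assume A: "F \<subseteq> E \<and> S = \<Union>F \<and> card F + 1 = b \<and> card (\<Union>F) = b \<and> connected_on (\<Union>F) F"
  then have FE: "F \<subseteq> E" and SU: "S = \<Union>F" and cF: "card F + 1 = b" and cS: "card S = b"
    and conn: "connected_on S F" by auto
  have fS: "finite S" using cS b2 card.infinite by fastforce
  have ne: "S \<noteq> {}" using cS b2 by auto
  have E2: "\<forall>e\<in>F. card e = 2 \<and> e \<subseteq> S" using FE SU EV by blast
  have "\<not> has_cycle S F" by (rule tree_of_card[OF fS E2 ne conn]) (use cF cS in simp)
  then have tr: "is_tree S F" using ne conn unfolding is_tree_def by blast
  have "S \<subseteq> V" using SU FE EV by blast
  then show "(S,F) \<in> span_trees V E b" unfolding span_trees_def using FE SU cS tr by blast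
qed

lemma span_card:
  assumes b2: "b \<ge> 2" and EV: "\<forall>e\<in>E. card e = 2 \<and> e \<subseteq> V"
  shows "card (span_trees V E b) =
    card {F. F \<subseteq> E \<and> card F = b - 1 \<and> (card (\<Union>F) = b \<and> connected_on (\<Union>F) F)}"
proof -
  let ?A = "{F. F \<subseteq> E \<and> card F = b - 1 \<and> (card (\<Union>F) = b \<and> connected_on (\<Union>F) F)}"
  have "span_trees V E b = (\<lambda>F. (\<Union>F, F)) ` ?A"
  proof (rule set_eqI)
    fix p
    show "p \<in> span_trees V E b \<longleftrightarrow> p \<in> (\<lambda>F. (\<Union>F, F)) ` ?A"
    proof (cases p)
      case (Pair S F)
      show ?thesis unfolding Pair span_char[OF b2 EV] using b2 by auto
    qed
  qed
  moreover have "inj_on (\<lambda>F. (\<Union>F, F)) ?A" by (rule inj_onI) simp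
  ultimately show ?thesis by (simp add: card_image)
qed

fun combs :: "nat \<Rightarrow> 'a list \<Rightarrow> 'a list list" where
  "combs 0 xs = [[]]"
| "combs (Suc k) [] = []"
| "combs (Suc k) (x#xs) = map ((#) x) (combs k xs) @ combs (Suc k) xs"

lemma combs_set: "distinct xs \<Longrightarrow> set ` set (combs k xs) = {A. A \<subseteq> set xs \<and> card A = k}"
proof (induction xs arbitrary: k)
  case Nil
  then show ?case by (cases k) auto
next
  case (Cons x xs)
  have dx: "distinct xs" and xn: "x \<notin> set xs" using Cons.prems by auto
  show ?case
  proof (cases k)
    case 0
    have fin: "\<And>A. A \<subseteq> set (x#xs) \<Longrightarrow> finite A" by (rule finite_subset) auto
    have "{A. A \<subseteq> set (x#xs) \<and> card A = 0} = {{}}"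
      using fin by (auto simp: card_eq_0_iff)
    then show ?thesis using 0 by simp
  next
    case (Suc m)
    have "set ` set (combs k (x#xs)) = insert x ` {A. A \<subseteq> set xs \<and> card A = m} \<union> {A. A \<subseteq> set xs \<and> card A = Suc m}"
    proof -
      have "(\<lambda>ys. insert x (set ys)) ` set (combs m xs) = insert x ` (set ` set (combs m xs))"
        by (simp add: image_image)
      moreover have "set ` (#) x ` set (combs m xs) = (\<lambda>ys. insert x (set ys)) ` set (combs m xs)"
        by (simp add: image_image)
      ultimately show ?thesis using Cons.IH[OF dx, of m] Cons.IH[OF dx, of "Suc m"] Suc by (simp only: combs.simps set_map set_append image_Un)
    qed
    also have "\<dots> = {A. A \<subseteq> set (x#xs) \<and> card A = k}"
    proof (rule set_eqI, rule iffI)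
      fix A assume "A \<in> insert x ` {A. A \<subseteq> set xs \<and> card A = m} \<union> {A. A \<subseteq> set xs \<and> card A = Suc m}"
      then show "A \<in> {A. A \<subseteq> set (x#xs) \<and> card A = k}"
      proof
        assume "A \<in> insert x ` {A. A \<subseteq> set xs \<and> card A = m}"
        then obtain B where B: "A = insert x B" "B \<subseteq> set xs" "card B = m" by auto
        have "finite B" using B(2) finite_subset by blast
        moreover have "x \<notin> B" using B(2) xn by blast
        ultimately have "card A = Suc m" using B by simp
        then show ?thesis using B Suc by auto
      next
        assume "A \<in> {A. A \<subseteq> set xs \<and> card A = Suc m}"
        then show ?thesis using Suc by auto
      qed
    next
      fix A assume A: "A \<in> {A. A \<subseteq> set (x#xs) \<and> card A = k}"
      then have As: "A \<subseteq> insert x (set xs)" and cA: "card A = Suc m" using Suc by auto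
      have fA: "finite A" using As finite_subset by blast
      show "A \<in> insert x ` {A. A \<subseteq> set xs \<and> card A = m} \<union> {A. A \<subseteq> set xs \<and> card A = Suc m}"
      proof (cases "x \<in> A")
        case True
        have "A = insert x (A - {x})" using True by blast
        moreover have "A - {x} \<subseteq> set xs" using As by blast
        moreover have "card (A - {x}) = m" using cA True fA by simp
        ultimately show ?thesis by blast
      next
        case False
        then have "A \<subseteq> set xs" using As by blast
        then show ?thesis using cA by blast
      qed
    qed
    finally show ?thesis .
  qed
qed

lemma combs_dist: "distinct xs \<Longrightarrow> distinct (map set (combs k xs))"
proof (induction xs arbitrary: k)
  case Nil
  then show ?case by (cases k) auto
next
  case (Cons x xs)
  have dx: "distinct xs" and xn: "x \<notin> set xs" using Cons.prems by auto
  show ?case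
  proof (cases k)
    case 0 then show ?thesis by simp
  next
    case (Suc m)
    have d1: "distinct (map set (combs m xs))" and d2: "distinct (map set (combs (Suc m) xs))"
      using Cons.IH[OF dx] by auto
    have sub: "\<And>ys n. ys \<in> set (combs n xs) \<Longrightarrow> set ys \<subseteq> set xs"
    proof -
      fix ys n assume "ys \<in> set (combs n xs)"
      then have "set ys \<in> set ` set (combs n xs)" by blast
      then show "set ys \<subseteq> set xs" using combs_set[OF dx, of n] by blast
    qed
    have "distinct (map (insert x \<circ> set) (combs m xs))"
    proof -
      have "distinct (combs m xs)" using d1 by (simp add: distinct_map)
      moreover have "inj_on (insert x \<circ> set) (set (combs m xs))"
      proof (rule inj_onI)
        fix a b assume a: "a \<in> set (combs m xs)" and b: "b \<in> set (combs m xs)"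
          and e: "(insert x \<circ> set) a = (insert x \<circ> set) b"
        have "x \<notin> set a" "x \<notin> set b" using sub[OF a] sub[OF b] xn by auto
        then have "set a = set b" using e by (auto simp: insert_ident)
        then show "a = b" using d1 a b by (auto simp: distinct_map dest: inj_onD)
      qed
      ultimately show ?thesis by (simp add: distinct_map)
    qed
    moreover have "set (map (insert x \<circ> set) (combs m xs)) \<inter> set (map set (combs (Suc m) xs)) = {}"
      using sub xn by fastforce
    ultimately show ?thesis using Suc d2 by (simp add: map_map[symmetric] o_def)
  qed
qed

lemma count_combs:
  assumes "distinct xs"
  shows "card {A. A \<subseteq> set xs \<and> card A = k \<and> P A} = length (filter (\<lambda>ys. P (set ys)) (combs k xs))"
proof -
  let ?L = "filter (\<lambda>ys. P (set ys)) (combs k xs)"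
  have "{A. A \<subseteq> set xs \<and> card A = k \<and> P A} = set (map set ?L)"
  proof (rule set_eqI, rule iffI)
    fix A assume "A \<in> {A. A \<subseteq> set xs \<and> card A = k \<and> P A}"
    then have A: "A \<in> set ` set (combs k xs)" "P A" using combs_set[OF assms, of k] by auto
    then obtain ys where "ys \<in> set (combs k xs)" "A = set ys" by blast
    then show "A \<in> set (map set ?L)" using A(2) by auto
  next
    fix A assume "A \<in> set (map set ?L)"
    then obtain ys where ys: "ys \<in> set (combs k xs)" "P (set ys)" "A = set ys" by auto
    then have "A \<in> set ` set (combs k xs)" by blast
    then show "A \<in> {A. A \<subseteq> set xs \<and> card A = k \<and> P A}" using combs_set[OF assms, of k] ys by auto
  qed
  moreover have "distinct (map set ?L)"
    using combs_dist[OF assms, of k] by (simp add: distinct_map_filter)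
  ultimately show ?thesis using distinct_card by fastforce
qed

definition mk :: "nat \<times> nat \<Rightarrow> nat set" where "mk p = {fst p, snd p}"

lemma count_edges:
  assumes d: "distinct es" and inj: "inj_on mk (set es)"
  shows "card {F. F \<subseteq> mk ` set es \<and> card F = k \<and> Q F} = length (filter (\<lambda>ys. Q (mk ` set ys)) (combs k es))"
proof -
  have "{F. F \<subseteq> mk ` set es \<and> card F = k \<and> Q F} = image mk ` {A. A \<subseteq> set es \<and> card A = k \<and> Q (mk ` A)}"
  proof (rule set_eqI, rule iffI)
    fix F assume "F \<in> {F. F \<subseteq> mk ` set es \<and> card F = k \<and> Q F}"
    then have F: "F \<subseteq> mk ` set es" "card F = k" "Q F" by auto
    then obtain A where A: "A \<subseteq> set es" "F = mk ` A" by (auto simp: subset_image_iff)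
    have "card A = k" using A F(2) card_image[OF inj_on_subset[OF inj A(1)]] by simp
    then show "F \<in> image mk ` {A. A \<subseteq> set es \<and> card A = k \<and> Q (mk ` A)}" using A F(3) by blast
  next
    fix F assume "F \<in> image mk ` {A. A \<subseteq> set es \<and> card A = k \<and> Q (mk ` A)}"
    then obtain A where A: "A \<subseteq> set es" "card A = k" "Q (mk ` A)" "F = mk ` A" by blast
    have "card F = k" using A card_image[OF inj_on_subset[OF inj A(1)]] by simp
    then show "F \<in> {F. F \<subseteq> mk ` set es \<and> card F = k \<and> Q F}" using A by blast
  qed
  moreover have "inj_on (image mk) {A. A \<subseteq> set es \<and> card A = k \<and> Q (mk ` A)}"
    by (rule inj_on_subset[OF inj_on_image_Pow[OF inj]]) auto
  ultimately have "card {F. F \<subseteq> mk ` set es \<and> card F = k \<and> Q F} = card {A. A \<subseteq> set es \<and> card A = k \<and> Q (mk ` A)}"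
    by (simp add: card_image)
  also have "\<dots> = length (filter (\<lambda>ys. Q (mk ` set ys)) (combs k es))"
    by (rule count_combs[OF d])
  finally show ?thesis .
qed

definition nb :: "'a set set \<Rightarrow> 'a set \<Rightarrow> 'a set" where
  "nb F R = R \<union> {v. \<exists>u\<in>R. {u,v} \<in> F}"

lemma nb_iff: "v \<in> nb F R \<longleftrightarrow> v \<in> R \<or> (\<exists>u\<in>R. {u,v} \<in> F)"
  by (simp add: nb_def)

lemma nb_sound: "v \<in> (nb F ^^ k) {x0} \<Longrightarrow> (adj F)\<^sup>*\<^sup>* x0 v"
proof (induction k arbitrary: v)
  case 0 then show ?case by simp
next
  case (Suc k)
  then have "v \<in> nb F ((nb F ^^ k) {x0})" by simp
  then have "v \<in> (nb F ^^ k) {x0} \<or> (\<exists>u\<in>(nb F ^^ k) {x0}. {u,v} \<in> F)" by (simp only: nb_iff)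
  then show ?case
  proof
    assume "v \<in> (nb F ^^ k) {x0}" then show ?thesis by (rule Suc.IH)
  next
    assume "\<exists>u\<in>(nb F ^^ k) {x0}. {u,v} \<in> F"
    then obtain u where u: "u \<in> (nb F ^^ k) {x0}" "{u,v} \<in> F" by blast
    have "(adj F)\<^sup>*\<^sup>* x0 u" by (rule Suc.IH[OF u(1)])
    then show ?thesis using u(2) by (rule rtranclp.rtrancl_into_rtrancl)
  qed
qed

lemma nb_closed: "(adj F)\<^sup>*\<^sup>* x v \<Longrightarrow> nb F R = R \<Longrightarrow> x \<in> R \<Longrightarrow> v \<in> R"
proof (induction rule: rtranclp.induct)
  case (rtrancl_refl a) then show ?case by simp
next
  case (rtrancl_into_rtrancl a b c)
  then have "b \<in> R" by blast
  then have "c \<in> nb F R" using rtrancl_into_rtrancl.hyps(2) by (auto simp: nb_iff)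
  then show ?case using rtrancl_into_rtrancl.prems(1) by simp
qed

lemma nb_mono: "R \<subseteq> nb F R" by (auto simp: nb_def)

lemma iter_sub: "\<forall>e\<in>F. e \<subseteq> S \<Longrightarrow> R \<subseteq> S \<Longrightarrow> (nb F ^^ k) R \<subseteq> S"
proof (induction k)
  case 0 then show ?case by simp
next
  case (Suc k)
  show ?case
  proof
    fix v assume "v \<in> (nb F ^^ Suc k) R"
    then have "v \<in> (nb F ^^ k) R \<or> (\<exists>u\<in>(nb F ^^ k) R. {u,v} \<in> F)" by (simp add: nb_iff)
    then show "v \<in> S"
    proof
      assume "\<exists>u\<in>(nb F ^^ k) R. {u,v} \<in> F"
      then obtain u where "{u,v} \<in> F" by blast
      then show "v \<in> S" using Suc.prems(1) by blast
    qed (use Suc in blast)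
  qed
qed

lemma iter_mem: "x \<in> R \<Longrightarrow> x \<in> (nb F ^^ k) R"
  by (induction k) (auto simp: nb_iff)

lemma nb_stay: "(nb F ^^ Suc j) R = (nb F ^^ j) R \<Longrightarrow> (nb F ^^ (j + m)) R = (nb F ^^ j) R"
proof (induction m)
  case 0 then show ?case by simp
next
  case (Suc m)
  have "(nb F ^^ (j + Suc m)) R = nb F ((nb F ^^ (j + m)) R)" by simp
  also have "\<dots> = nb F ((nb F ^^ j) R)" using Suc by simp
  also have "\<dots> = (nb F ^^ j) R" using Suc.prems by simp
  finally show ?case .
qed

lemma nb_grow:
  assumes fS: "finite S" and E: "\<forall>e\<in>F. e \<subseteq> S" and R: "R \<subseteq> S"
  shows "(\<forall>j<k. (nb F ^^ Suc j) R \<noteq> (nb F ^^ j) R) \<Longrightarrow> card ((nb F ^^ k) R) \<ge> k + card R"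
proof (induction k)
  case 0 then show ?case by simp
next
  case (Suc k)
  let ?A = "(nb F ^^ k) R" and ?B = "(nb F ^^ Suc k) R"
  have "?A \<subseteq> ?B" using nb_mono by simp
  moreover have "?A \<noteq> ?B" using Suc.prems by auto
  ultimately have "?A \<subset> ?B" by blast
  moreover have "finite ?B" using iter_sub[OF E R] fS finite_subset by blast
  ultimately have "card ?A < card ?B" by (rule psubset_card_mono[rotated])
  moreover have "card ?A \<ge> k + card R" using Suc by auto
  ultimately show ?case by simp
qed

lemma nb_fix:
  assumes fS: "finite S" and E: "\<forall>e\<in>F. e \<subseteq> S" and R: "R \<subseteq> S" and ne: "R \<noteq> {}"
  shows "nb F ((nb F ^^ card S) R) = (nb F ^^ card S) R"
proof -
  have "\<exists>j<card S. (nb F ^^ Suc j) R = (nb F ^^ j) R"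
  proof (rule ccontr)
    assume "\<not> ?thesis"
    then have "card ((nb F ^^ card S) R) \<ge> card S + card R" using nb_grow[OF fS E R] by blast
    moreover have "card R > 0" using ne R fS finite_subset by (auto simp: card_gt_0_iff)
    moreover have "card ((nb F ^^ card S) R) \<le> card S" using iter_sub[OF E R] fS by (simp add: card_mono)
    ultimately show False by simp
  qed
  then obtain j where j: "j < card S" "(nb F ^^ Suc j) R = (nb F ^^ j) R" by blast
  have a: "(nb F ^^ card S) R = (nb F ^^ j) R" using nb_stay[OF j(2), of "card S - j"] j(1) by simp
  have b: "(nb F ^^ Suc (card S)) R = (nb F ^^ j) R" using nb_stay[OF j(2), of "Suc (card S) - j"] j(1) by simp
  show ?thesis using a b by simp
qed

lemma conn_iff:
  assumes fS: "finite S" and E: "\<forall>e\<in>F. e \<subseteq> S" and x0: "x0 \<in> S"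
  shows "connected_on S F \<longleftrightarrow> S \<subseteq> (nb F ^^ card S) {x0}"
proof
  assume c: "connected_on S F"
  have fx: "nb F ((nb F ^^ card S) {x0}) = (nb F ^^ card S) {x0}"
    by (rule nb_fix[OF fS E]) (use x0 in auto)
  have x0R: "x0 \<in> (nb F ^^ card S) {x0}"
    by (rule iter_mem) simp
  show "S \<subseteq> (nb F ^^ card S) {x0}"
  proof
    fix y assume "y \<in> S"
    then have "(adj F)\<^sup>*\<^sup>* x0 y" using c x0 unfolding connected_on_def by blast
    then show "y \<in> (nb F ^^ card S) {x0}" by (rule nb_closed[OF _ fx x0R])
  qed
next
  assume s: "S \<subseteq> (nb F ^^ card S) {x0}"
  show "connected_on S F" unfolding connected_on_def
  proof (intro ballI)
    fix x y assume xy: "x \<in> S" "y \<in> S"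
    have a: "(adj F)\<^sup>*\<^sup>* x0 x" by (rule nb_sound[where k="card S"]) (use s xy in blast)
    have b: "(adj F)\<^sup>*\<^sup>* x0 y" by (rule nb_sound[where k="card S"]) (use s xy in blast)
    show "(adj F)\<^sup>*\<^sup>* x y" by (rule rtranclp_trans[OF rt_sym[OF a] b])
  qed
qed

definition vl :: "(nat \<times> nat) list \<Rightarrow> nat list" where
  "vl ys = concat (map (\<lambda>p. [fst p, snd p]) ys)"

definition stp :: "(nat \<times> nat) list \<Rightarrow> nat list \<Rightarrow> nat list" where
  "stp ys R = remdups (R @ map snd (filter (\<lambda>p. fst p \<in> set R) ys) @ map fst (filter (\<lambda>p. snd p \<in> set R) ys))"

fun iter :: "(nat \<times> nat) list \<Rightarrow> nat \<Rightarrow> nat list \<Rightarrow> nat list" where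
  "iter ys 0 R = R"
| "iter ys (Suc k) R = iter ys k (stp ys R)"

definition conn_ok :: "(nat \<times> nat) list \<Rightarrow> bool" where
  "conn_ok ys = (let V = remdups (vl ys) in V = [] \<or> list_all (\<lambda>v. v \<in> set (iter ys (length V) [hd V])) V)"

definition Qc :: "nat \<Rightarrow> (nat \<times> nat) list \<Rightarrow> bool" where
  "Qc b ys = (length (remdups (vl ys)) = b \<and> conn_ok ys)"

lemma set_vl: "set (vl ys) = \<Union>(mk ` set ys)"
  by (auto simp: vl_def mk_def)

lemma set_stp: "set (stp ys R) = nb (mk ` set ys) (set R)"
proof (rule set_eqI)
  fix v
  have "(\<exists>u\<in>set R. {u,v} \<in> mk ` set ys) \<longleftrightarrow>
        (\<exists>p\<in>set ys. fst p \<in> set R \<and> snd p = v) \<or> (\<exists>p\<in>set ys. snd p \<in> set R \<and> fst p = v)"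
  proof
    assume "\<exists>u\<in>set R. {u,v} \<in> mk ` set ys"
    then obtain u p where u: "u \<in> set R" "p \<in> set ys" "{u,v} = {fst p, snd p}" by (auto simp: mk_def)
    then have "(u = fst p \<and> v = snd p) \<or> (u = snd p \<and> v = fst p)" by (auto simp: doubleton_eq_iff)
    then show "(\<exists>p\<in>set ys. fst p \<in> set R \<and> snd p = v) \<or> (\<exists>p\<in>set ys. snd p \<in> set R \<and> fst p = v)"
      using u by blast
  next
    assume "(\<exists>p\<in>set ys. fst p \<in> set R \<and> snd p = v) \<or> (\<exists>p\<in>set ys. snd p \<in> set R \<and> fst p = v)"
    then show "\<exists>u\<in>set R. {u,v} \<in> mk ` set ys"
    proof
      assume "\<exists>p\<in>set ys. fst p \<in> set R \<and> snd p = v"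
      then obtain p where p: "p \<in> set ys" "fst p \<in> set R" "snd p = v" by blast
      then have "{fst p, v} \<in> mk ` set ys" by (auto simp: mk_def)
      then show ?thesis using p by blast
    next
      assume "\<exists>p\<in>set ys. snd p \<in> set R \<and> fst p = v"
      then obtain p where p: "p \<in> set ys" "snd p \<in> set R" "fst p = v" by blast
      then have "{snd p, v} \<in> mk ` set ys" by (auto simp: mk_def insert_commute)
      then show ?thesis using p by blast
    qed
  qed
  then show "v \<in> set (stp ys R) \<longleftrightarrow> v \<in> nb (mk ` set ys) (set R)"
    unfolding nb_iff stp_def by auto
qed

lemma set_iter: "set (iter ys k R) = (nb (mk ` set ys) ^^ k) (set R)"
proof (induction k arbitrary: R)
  case 0 then show ?case by simp
next
  case (Suc k)
  have "set (iter ys (Suc k) R) = (nb (mk ` set ys) ^^ k) (nb (mk ` set ys) (set R))"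
    using Suc.IH[of "stp ys R"] by (simp add: set_stp)
  also have "\<dots> = (nb (mk ` set ys) ^^ Suc k) (set R)" by (simp only: funpow_Suc_right o_def)
  finally show ?case .
qed

lemma conn_ok_iff: "conn_ok ys \<longleftrightarrow> connected_on (\<Union>(mk ` set ys)) (mk ` set ys)"
proof -
  let ?S = "\<Union>(mk ` set ys)" and ?F = "mk ` set ys"
  define V where "V = remdups (vl ys)"
  have sV: "set V = ?S" by (simp add: V_def set_vl)
  have lV: "length V = card ?S" using sV by (metis V_def distinct_card distinct_remdups)
  have fS: "finite ?S" by (simp add: mk_def)
  have E: "\<forall>e\<in>?F. e \<subseteq> ?S" by blast
  show ?thesis
  proof (cases "V = []")
    case True
    then have "?S = {}" using sV by simp
    then show ?thesis using True unfolding conn_ok_def connected_on_def V_def[symmetric] by simp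
  next
    case False
    have x0: "hd V \<in> ?S" using False sV by (metis hd_in_set)
    have "conn_ok ys \<longleftrightarrow> set V \<subseteq> set (iter ys (length V) [hd V])"
      unfolding conn_ok_def V_def[symmetric] Let_def using False by (auto simp: list_all_iff)
    also have "\<dots> \<longleftrightarrow> ?S \<subseteq> (nb ?F ^^ card ?S) {hd V}" by (simp add: sV lV set_iter)
    also have "\<dots> \<longleftrightarrow> connected_on ?S ?F" by (rule conn_iff[OF fS E x0, symmetric])
    finally show ?thesis .
  qed
qed

lemma Qc_iff: "Qc b ys \<longleftrightarrow> (card (\<Union>(mk ` set ys)) = b \<and> connected_on (\<Union>(mk ` set ys)) (mk ` set ys))"
proof -
  have "length (remdups (vl ys)) = card (\<Union>(mk ` set ys))"
    by (simp add: length_remdups_card_conv set_vl)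
  then show ?thesis unfolding Qc_def conn_ok_iff by simp
qed

lemma count_trees:
  assumes b2: "b \<ge> 2" and EV: "\<forall>e\<in>mk ` set es. card e = 2 \<and> e \<subseteq> V"
    and d: "distinct es" and inj: "inj_on mk (set es)"
  shows "card (span_trees V (mk ` set es) b) = length (filter (Qc b) (combs (b - 1) es))"
proof -
  have "card (span_trees V (mk ` set es) b) =
    card {F. F \<subseteq> mk ` set es \<and> card F = b - 1 \<and> (card (\<Union>F) = b \<and> connected_on (\<Union>F) F)}"
    by (rule span_card[OF b2 EV])
  also have "\<dots> = length (filter (\<lambda>ys. card (\<Union>(mk ` set ys)) = b \<and> connected_on (\<Union>(mk ` set ys)) (mk ` set ys)) (combs (b - 1) es))"
    by (rule count_edges[OF d inj])
  also have "\<dots> = length (filter (Qc b) (combs (b - 1) es))"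
  proof -
    have "(\<lambda>ys. card (\<Union>(mk ` set ys)) = b \<and> connected_on (\<Union>(mk ` set ys)) (mk ` set ys)) = Qc b"
      by (rule ext) (simp only: Qc_iff)
    then show ?thesis by simp
  qed
  finally show ?thesis .
qed

lemma inj_mk: "\<forall>p\<in>set es. fst p < snd p \<Longrightarrow> inj_on mk (set es)"
proof (rule inj_onI)
  fix p q assume A: "\<forall>p\<in>set es. fst p < snd p" "p \<in> set es" "q \<in> set es" "mk p = mk q"
  then have "fst p < snd p" "fst q < snd q" by auto
  moreover have "fst p = fst q \<and> snd p = snd q \<or> fst p = snd q \<and> snd p = fst q"
    using A(4) by (simp add: mk_def doubleton_eq_iff)
  ultimately show "p = q" by (simp add: prod_eq_iff) linarith
qed

definition K5l :: "(nat \<times> nat) list" where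
  "K5l = concat (map (\<lambda>i. map (\<lambda>j. (i,j)) [Suc i..<6]) [1..<6])"

definition esl :: "nat \<Rightarrow> (nat \<times> nat) list" where
  "esl n = K5l @ map (\<lambda>i. (i, Suc i)) [5..<n]"

lemma K5l_mem: "p \<in> set K5l \<longleftrightarrow> 1 \<le> fst p \<and> fst p < snd p \<and> snd p \<le> 5"
proof (cases p)
  case (Pair a b)
  have "(a,b) \<in> set K5l \<longleftrightarrow> 1 \<le> a \<and> a < b \<and> b \<le> 5"
  proof
    assume "(a,b) \<in> set K5l" then show "1 \<le> a \<and> a < b \<and> b \<le> 5" by (auto simp: K5l_def)
  next
    assume A: "1 \<le> a \<and> a < b \<and> b \<le> 5"
    then have "(a,b) \<in> set (map (\<lambda>j. (a,j)) [Suc a..<6])" by auto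
    moreover have "a \<in> set [1..<6]" using A by auto
    ultimately show "(a,b) \<in> set K5l" unfolding K5l_def by auto
  qed
  then show ?thesis using Pair by simp
qed

lemma K5_set: "{{i, j} | i j. i \<in> {1..5::nat} \<and> j \<in> {1..5} \<and> i \<noteq> j} = mk ` set K5l"
proof (rule set_eqI, rule iffI)
  fix e assume "e \<in> {{i, j} | i j. i \<in> {1..5::nat} \<and> j \<in> {1..5} \<and> i \<noteq> j}"
  then obtain i j where e: "e = {i,j}" "i \<in> {1..5::nat}" "j \<in> {1..5}" "i \<noteq> j" by blast
  show "e \<in> mk ` set K5l"
  proof (cases "i < j")
    case True
    then have "(i,j) \<in> set K5l" using e by (simp add: K5l_mem)
    moreover have "e = mk (i,j)" using e by (simp add: mk_def)
    ultimately show ?thesis by blast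
  next
    case False
    then have "(j,i) \<in> set K5l" using e by (simp add: K5l_mem)
    moreover have "e = mk (j,i)" using e by (simp add: mk_def insert_commute)
    ultimately show ?thesis by blast
  qed
next
  fix e assume "e \<in> mk ` set K5l"
  then obtain p where p: "p \<in> set K5l" "e = mk p" by blast
  then have "1 \<le> fst p \<and> fst p < snd p \<and> snd p \<le> 5" by (simp add: K5l_mem)
  then show "e \<in> {{i, j} | i j. i \<in> {1..5::nat} \<and> j \<in> {1..5} \<and> i \<noteq> j}"
    using p(2) unfolding mk_def by force
qed

lemma HE_mk: "H_E n = mk ` set (esl n)"
proof -
  have "{{i, Suc i} | i. 5 \<le> i \<and> Suc i \<le> n} = (\<lambda>i. {i, Suc i}) ` {5..<n}"
    by (auto simp: Suc_le_eq image_def)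
  also have "\<dots> = mk ` set (map (\<lambda>i. (i, Suc i)) [5..<n])"
    by (simp add: mk_def image_image)
  finally have "{{i, Suc i} | i. 5 \<le> i \<and> Suc i \<le> n} = mk ` set (map (\<lambda>i. (i, Suc i)) [5..<n])" .
  then show ?thesis unfolding H_E_def esl_def K5_set by (simp only: set_append image_Un)
qed

lemma HE_cases:
  assumes "e \<in> H_E n"
  obtains i j where "e = {i,j}" "1 \<le> i" "i \<le> 5" "1 \<le> j" "j \<le> 5" "i \<noteq> j"
  | i where "e = {i, Suc i}" "5 \<le> i" "Suc i \<le> n"
  using assms unfolding H_E_def by auto

lemma HE_EV: "\<forall>e\<in>H_E n. card e = 2 \<and> e \<subseteq> H_V n" if "n \<ge> 5"
proof
  fix e assume "e \<in> H_E n"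
  then show "card e = 2 \<and> e \<subseteq> H_V n"
  proof (cases rule: HE_cases)
    case (1 i j) then show ?thesis using that by (auto simp: H_V_def)
  next
    case (2 i) then show ?thesis by (auto simp: H_V_def)
  qed
qed

lemma esl_ok: "distinct (esl n)" "inj_on mk (set (esl n))"
proof -
  have "distinct K5l" unfolding K5l_def by code_simp
  moreover have "distinct (map (\<lambda>i. (i, Suc i)) [5..<n])" by (simp add: distinct_map inj_on_def)
  moreover have "set K5l \<inter> set (map (\<lambda>i. (i, Suc i)) [5..<n]) = {}" by (auto simp: K5l_mem)
  ultimately show "distinct (esl n)" unfolding esl_def by simp
  show "inj_on mk (set (esl n))" by (rule inj_mk) (auto simp: esl_def K5l_mem)
qed

lemma count_H: assumes n5: "n \<ge> 5" and b2: "b \<ge> 2" shows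
  "card (span_trees (H_V n) (H_E n) b) = length (filter (Qc b) (combs (b - 1) (esl n)))"
proof -
  have EV: "\<forall>e\<in>mk ` set (esl n). card e = 2 \<and> e \<subseteq> H_V n" using HE_EV[OF n5] by (simp add: HE_mk)
  show ?thesis unfolding HE_mk by (rule count_trees[OF b2 EV esl_ok])
qed

definition Pt :: "nat \<Rightarrow> nat \<Rightarrow> nat set \<times> nat set set" where
  "Pt m M = ({m..M}, (\<lambda>i. {i, Suc i}) ` {m..<M})"

lemma path_acyclic:
  assumes P: "\<forall>e\<in>F. \<exists>i. e = {i, Suc i}"
  shows "\<not> has_cycle S F"
proof
  assume "has_cycle S F"
  then obtain vs where L: "length vs \<ge> 3" and d: "distinct vs"
    and c: "\<forall>i. Suc i < length vs \<longrightarrow> {vs ! i, vs ! Suc i} \<in> F"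
    and cl: "{last vs, hd vs} \<in> F" unfolding has_cycle_def by blast
  have ne: "set vs \<noteq> {}" using L by auto
  define t where "t = Max (set vs)"
  have tin: "t \<in> set vs" using ne by (simp add: t_def)
  then obtain j where j: "j < length vs" "vs ! j = t" by (auto simp: in_set_conv_nth)
  from cyc_nb[OF L d c cl j(1)] obtain a b where
    ab: "a \<noteq> b" "a \<in> set vs" "b \<in> set vs" "{t,a} \<in> F" "{t,b} \<in> F" using j(2) by auto
  have key: "Suc x = t" if x: "x \<in> set vs" "{t,x} \<in> F" for x
  proof -
    obtain i where i: "{t,x} = {i, Suc i}" using P x(2) by blast
    have "x \<le> t" using x(1) by (simp add: t_def)
    moreover have "t = i \<and> x = Suc i \<or> t = Suc i \<and> x = i" using i by (simp add: doubleton_eq_iff)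
    ultimately show "Suc x = t" by auto
  qed
  have "Suc a = t" "Suc b = t" using key ab by auto
  then show False using ab(1) by simp
qed

lemma path_conn: "connected_on {m..M} ((\<lambda>i. {i, Suc i}) ` {m..<M})"
proof -
  let ?F = "(\<lambda>i. {i, Suc i}) ` {m..<M}"
  have r: "m + d \<le> M \<Longrightarrow> (adj ?F)\<^sup>*\<^sup>* m (m + d)" for d
  proof (induction d)
    case 0 then show ?case by simp
  next
    case (Suc d)
    then have "(adj ?F)\<^sup>*\<^sup>* m (m + d)" by simp
    moreover have "adj ?F (m + d) (m + Suc d)" using Suc.prems by auto
    ultimately show ?case by (rule rtranclp.rtrancl_into_rtrancl)
  qed
  have r2: "x \<in> {m..M} \<Longrightarrow> (adj ?F)\<^sup>*\<^sup>* m x" for x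
    using r[of "x - m"] by simp
  show ?thesis unfolding connected_on_def
  proof (intro ballI)
    fix x y assume "x \<in> {m..M}" "y \<in> {m..M}"
    then have a: "(adj ?F)\<^sup>*\<^sup>* m x" and b: "(adj ?F)\<^sup>*\<^sup>* m y" using r2 by blast+
    show "(adj ?F)\<^sup>*\<^sup>* x y" by (rule rtranclp_trans[OF rt_sym[OF a] b])
  qed
qed

lemma Pt_in:
  assumes m5: "5 \<le> m" and mN: "m \<le> N" and b: "b = N + 1 - m"
  shows "Pt m N \<in> span_trees (H_V N) (H_E N) b"
proof -
  let ?F = "(\<lambda>i. {i, Suc i}) ` {m..<N}"
  have "{m..N} \<subseteq> H_V N" using m5 by (auto simp: H_V_def)
  moreover have "?F \<subseteq> H_E N"
  proof
    fix e assume "e \<in> ?F"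
    then obtain i where i: "e = {i, Suc i}" "m \<le> i" "i < N" by auto
    then have "e \<in> {{i, Suc i} | i. 5 \<le> i \<and> Suc i \<le> N}" using m5 by auto
    then show "e \<in> H_E N" unfolding H_E_def by blast
  qed
  moreover have "\<forall>e\<in>?F. e \<subseteq> {m..N}" by auto
  moreover have "card {m..N} = b" using b by simp
  moreover have "is_tree {m..N} ?F" unfolding is_tree_def
    using path_conn[of m N] path_acyclic[of ?F "{m..N}"] mN by auto
  ultimately show ?thesis unfolding Pt_def span_trees_def by blast
qed

lemma cut:
  assumes FE: "F \<subseteq> H_E N" and r: "(adj F)\<^sup>*\<^sup>* u v" and k6: "6 \<le> k" and ku: "k \<le> u" and vk: "v < k"
  shows "{k - 1, k} \<in> F"
proof -
  have "v < k \<longrightarrow> {k - 1, k} \<in> F" using r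
  proof (induction rule: rtranclp_induct)
    case base then show ?case using ku by simp
  next
    case (step w v)
    show ?case
    proof
      assume vk: "v < k"
      show "{k - 1, k} \<in> F"
      proof (cases "w < k")
        case True then show ?thesis using step.IH by blast
      next
        case False
        have "{w,v} \<in> H_E N" using step.hyps(2) FE by blast
        then show ?thesis
        proof (cases rule: HE_cases)
          case (1 i j)
          then have "w \<le> 5" by (auto simp: doubleton_eq_iff)
          then show ?thesis using False k6 by simp
        next
          case (2 i)
          then have "w = i \<and> v = Suc i \<or> w = Suc i \<and> v = i" by (simp add: doubleton_eq_iff)
          then have "w = Suc i" "v = i" using False vk by auto
          then have "k = Suc i" using False vk by simp
          then have "{k - 1, k} = {w, v}" using \<open>w = Suc i\<close> \<open>v = i\<close> by (simp add: insert_commute)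
          then show ?thesis using step.hyps(2) by simp
        qed
      qed
    qed
  qed
  then show ?thesis using vk by blast
qed

lemma span_fin: "n \<ge> 5 \<Longrightarrow> finite (span_trees (H_V n) (H_E n) b)"
proof -
  have "span_trees (H_V n) (H_E n) b \<subseteq> Pow (H_V n) \<times> Pow (H_E n)" unfolding span_trees_def by auto
  moreover have "finite (H_V n)" by (simp add: H_V_def)
  moreover have "finite (H_E n)" by (simp add: HE_mk)
  ultimately show ?thesis by (meson finite_Pow_iff finite_SigmaI finite_subset)
qed

lemma HE_mono: "H_E n \<subseteq> H_E (Suc n)"
  unfolding H_E_def by auto

lemma tree_up: "(S,F) \<in> span_trees (H_V n) (H_E n) b \<Longrightarrow> (S,F) \<in> span_trees (H_V (Suc n)) (H_E (Suc n)) b"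
proof -
  assume A: "(S,F) \<in> span_trees (H_V n) (H_E n) b"
  have "H_V n \<subseteq> H_V (Suc n)" by (auto simp: H_V_def)
  then show ?thesis using A HE_mono[of n] unfolding span_trees_def by blast
qed

lemma tree_low:
  assumes T: "(S,F) \<in> span_trees (H_V (Suc n)) (H_E (Suc n)) b" and ns: "Suc n \<notin> S"
  shows "(S,F) \<in> span_trees (H_V n) (H_E n) b"
proof -
  have SV: "S \<subseteq> H_V (Suc n)" and FE: "F \<subseteq> H_E (Suc n)" and FS: "\<forall>e\<in>F. e \<subseteq> S"
    and rest: "card S = b" "is_tree S F" using T unfolding span_trees_def by auto
  have "S \<subseteq> H_V n" using SV ns by (auto simp: H_V_def le_Suc_eq)
  moreover have "F \<subseteq> H_E n"
  proof
    fix e assume e: "e \<in> F"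
    then have eS: "e \<subseteq> S" using FS by blast
    have "e \<in> H_E (Suc n)" using e FE by blast
    then show "e \<in> H_E n"
    proof (cases rule: HE_cases)
      case (1 i j)
      then have "e \<in> {{i, j} | i j. i \<in> {1..5::nat} \<and> j \<in> {1..5} \<and> i \<noteq> j}" by auto
      then show ?thesis unfolding H_E_def by blast
    next
      case (2 i)
      then have "Suc i \<noteq> Suc n" using eS ns by blast
      then have "e \<in> {{i, Suc i} | i. 5 \<le> i \<and> Suc i \<le> n}" using 2 by auto
      then show ?thesis unfolding H_E_def by blast
    qed
  qed
  ultimately show ?thesis using FS rest unfolding span_trees_def by blast
qed

lemma tree_top:
  assumes nb: "b + 3 \<le> n" and b2: "2 \<le> b"
    and T: "(S,F) \<in> span_trees (H_V (Suc n)) (H_E (Suc n)) b" and top: "Suc n \<in> S"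
  shows "(S,F) = Pt (n + 2 - b) (Suc n)"
proof -
  have SV: "S \<subseteq> {1..Suc n}" and FE: "F \<subseteq> H_E (Suc n)" and FS: "\<forall>e\<in>F. e \<subseteq> S"
    and cS: "card S = b" and tr: "is_tree S F" using T unfolding span_trees_def H_V_def by auto
  have fS: "finite S" using SV finite_subset by blast
  have conn: "connected_on S F" using tr unfolding is_tree_def by blast
  define m where "m = n + 2 - b"
  have m5: "5 \<le> m" using nb by (simp add: m_def)
  have rt: "(adj F)\<^sup>*\<^sup>* (Suc n) x" if "x \<in> S" for x using conn top that unfolding connected_on_def by blast
  have low: "m \<le> x" if xS: "x \<in> S" for x
  proof (rule ccontr)
    assume "\<not> m \<le> x" then have xm: "x < m" by simp
    have inS: "j \<in> S" if j: "max x 5 \<le> j" "j \<le> Suc n" for j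
    proof (cases "j = Suc n")
      case True then show ?thesis using top by simp
    next
      case False
      have "{Suc j - 1, Suc j} \<in> F"
        by (rule cut[OF FE rt[OF xS], of "Suc j"]) (use j False in auto)
      then show ?thesis using FS by auto
    qed
    define T where "T = insert x {max x 5..Suc n}"
    have TS: "T \<subseteq> S" using inS xS by (auto simp: T_def)
    have "card T > b"
    proof (cases "5 \<le> x")
      case True
      moreover have "x \<le> Suc n" using xS SV by auto
      ultimately have "T = {x..Suc n}" by (auto simp: T_def max_def)
      then show ?thesis using xm m_def nb by simp
    next
      case False
      then have "x \<notin> {max x 5..Suc n}" by simp
      then have "card T = Suc (card {max x 5..Suc n})" by (simp add: T_def)
      then show ?thesis using False nb by (simp add: max_def)
    qed
    moreover have "card T \<le> card S" using TS fS by (rule card_mono[rotated])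
    ultimately show False using cS by simp
  qed
  have Ssub: "S \<subseteq> {m..Suc n}" using low SV by auto
  have "card {m..Suc n} = b" using nb b2 by (simp add: m_def)
  then have Seq: "S = {m..Suc n}" using card_subset_eq[OF _ Ssub] cS by simp
  have "m \<le> Suc n" using nb b2 unfolding m_def by arith
  then have mS: "m \<in> S" using Seq by simp
  have Feq: "F = (\<lambda>i. {i, Suc i}) ` {m..<Suc n}"
  proof
    show "F \<subseteq> (\<lambda>i. {i, Suc i}) ` {m..<Suc n}"
    proof
      fix e assume e: "e \<in> F"
      then have eS: "e \<subseteq> {m..Suc n}" using FS Seq by blast
      have "e \<in> H_E (Suc n)" using e FE by blast
      then show "e \<in> (\<lambda>i. {i, Suc i}) ` {m..<Suc n}"
      proof (cases rule: HE_cases)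
        case (1 i j)
        then have "m \<le> i" "m \<le> j" using eS by auto
        then show ?thesis using 1 m5 by simp
      next
        case (2 i)
        then have "m \<le> i" using eS by auto
        then show ?thesis using 2 by auto
      qed
    qed
  next
    show "(\<lambda>i. {i, Suc i}) ` {m..<Suc n} \<subseteq> F"
    proof
      fix e assume "e \<in> (\<lambda>i. {i, Suc i}) ` {m..<Suc n}"
      then obtain i where i: "e = {i, Suc i}" "m \<le> i" "i < Suc n" by auto
      have "{Suc i - 1, Suc i} \<in> F"
        by (rule cut[OF FE rt[OF mS], of "Suc i"]) (use i m5 in auto)
      then show "e \<in> F" using i by simp
    qed
  qed
  show ?thesis using Seq Feq by (simp add: Pt_def m_def)
qed

lemma tree_step:
  assumes nb: "b + 3 \<le> n" and b2: "2 \<le> b"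
  shows "card (span_trees (H_V (Suc n)) (H_E (Suc n)) b) = Suc (card (span_trees (H_V n) (H_E n) b))"
proof -
  define m where "m = n + 2 - b"
  have eq: "span_trees (H_V (Suc n)) (H_E (Suc n)) b = insert (Pt m (Suc n)) (span_trees (H_V n) (H_E n) b)"
  proof
    show "span_trees (H_V (Suc n)) (H_E (Suc n)) b \<subseteq> insert (Pt m (Suc n)) (span_trees (H_V n) (H_E n) b)"
    proof
      fix p assume p: "p \<in> span_trees (H_V (Suc n)) (H_E (Suc n)) b"
      obtain S F where SF: "p = (S,F)" by (cases p)
      show "p \<in> insert (Pt m (Suc n)) (span_trees (H_V n) (H_E n) b)"
      proof (cases "Suc n \<in> S")
        case True
        then show ?thesis using tree_top[OF nb b2] p SF m_def by simp
      next
        case False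
        then show ?thesis using tree_low p SF by simp
      qed
    qed
  next
    have c: "5 \<le> m" "m \<le> Suc n" "b = Suc n + 1 - m" using nb b2 by (auto simp: m_def)
    have "Pt m (Suc n) \<in> span_trees (H_V (Suc n)) (H_E (Suc n)) b"
      by (rule Pt_in[OF c])
    moreover have "span_trees (H_V n) (H_E n) b \<subseteq> span_trees (H_V (Suc n)) (H_E (Suc n)) b"
      using tree_up by auto
    ultimately show "insert (Pt m (Suc n)) (span_trees (H_V n) (H_E n) b) \<subseteq> span_trees (H_V (Suc n)) (H_E (Suc n)) b"
      by blast
  qed
  have "Pt m (Suc n) \<notin> span_trees (H_V n) (H_E n) b"
  proof
    assume "Pt m (Suc n) \<in> span_trees (H_V n) (H_E n) b"
    then have "{m..Suc n} \<subseteq> {1..n}" unfolding Pt_def span_trees_def H_V_def by auto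
    moreover have "m \<le> Suc n" using nb b2 unfolding m_def by arith
    then have "Suc n \<in> {m..Suc n}" by simp
    ultimately show False by auto
  qed
  moreover have "finite (span_trees (H_V n) (H_E n) b)" by (rule span_fin) (use nb b2 in simp)
  ultimately show ?thesis using eq by simp
qed

lemma lin:
  assumes b2: "2 \<le> b" and n: "b + 3 \<le> n"
  shows "card (span_trees (H_V n) (H_E n) b) = card (span_trees (H_V (b+3)) (H_E (b+3)) b) + (n - (b + 3))"
  using n
proof (induction n rule: dec_induct)
  case base then show ?case by simp
next
  case (step k)
  then show ?case using tree_step[OF step.hyps(1) b2] by simp
qed

lemma cliques_H:
  assumes n5: "5 \<le> n" and b3: "3 \<le> b"
  shows "cliques (H_V n) (H_E n) b = {S. S \<subseteq> {1..5} \<and> card S = b}"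
proof
  show "cliques (H_V n) (H_E n) b \<subseteq> {S. S \<subseteq> {1..5} \<and> card S = b}"
  proof
    fix S assume "S \<in> cliques (H_V n) (H_E n) b"
    then have SV: "S \<subseteq> {1..n}" and cS: "card S = b"
      and cl: "\<forall>x\<in>S. \<forall>y\<in>S. x \<noteq> y \<longrightarrow> {x, y} \<in> H_E n"
      unfolding cliques_def H_V_def by auto
    have fS: "finite S" using SV finite_subset by blast
    have "S \<subseteq> {1..5}"
    proof
      fix x assume xS: "x \<in> S"
      have x1: "1 \<le> x" using xS SV by auto
      show "x \<in> {1..5}"
      proof (rule ccontr)
        assume "x \<notin> {1..5}"
        then have x6: "6 \<le> x" using x1 by auto
        have nbr: "Suc w = x \<or> w = Suc x" if w: "w \<in> S" "w \<noteq> x" for w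
        proof -
          have "x \<noteq> w" using w(2) by simp
          then have "{x,w} \<in> H_E n" using cl xS w(1) by simp
          then show ?thesis
          proof (cases rule: HE_cases)
            case (1 i j)
            then have "x \<le> 5" by (auto simp: doubleton_eq_iff)
            then show ?thesis using x6 by simp
          next
            case (2 i)
            then have "x = i \<and> w = Suc i \<or> x = Suc i \<and> w = i" by (simp add: doubleton_eq_iff)
            then show ?thesis by auto
          qed
        qed
        have "card (S - {x}) \<ge> 2" using cS b3 xS fS by simp
        then have "S - {x} \<noteq> {}" by (intro notI) simp
        then obtain y where y: "y \<in> S" "y \<noteq> x" by blast
        have "card (S - {x} - {y}) \<ge> 1" using cS b3 xS fS y by (simp add: card_Diff_subset)
        then have "S - {x} - {y} \<noteq> {}" by (intro notI) simp
        then obtain z where z: "z \<in> S" "z \<noteq> x" "z \<noteq> y" by blast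
        have ny: "Suc y = x \<or> y = Suc x" by (rule nbr[OF y])
        have nz: "Suc z = x \<or> z = Suc x" by (rule nbr[OF z(1,2)])
        have "{y,z} \<in> H_E n" using cl y(1) z(1) z(3)[symmetric] by simp
        then show False
        proof (cases rule: HE_cases)
          case (1 i j)
          then have "y \<le> 5" "z \<le> 5" by (auto simp: doubleton_eq_iff)
          then show False using ny nz x6 z(3) by auto
        next
          case (2 i)
          then have "y = i \<and> z = Suc i \<or> y = Suc i \<and> z = i" by (simp add: doubleton_eq_iff)
          then show False using ny nz z(3) by auto
        qed
      qed
    qed
    then show "S \<in> {S. S \<subseteq> {1..5} \<and> card S = b}" using cS by simp
  qed
next
  show "{S. S \<subseteq> {1..5} \<and> card S = b} \<subseteq> cliques (H_V n) (H_E n) b"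
  proof
    fix S assume "S \<in> {S. S \<subseteq> {1..5::nat} \<and> card S = b}"
    then have S5: "S \<subseteq> {1..5}" and cS: "card S = b" by auto
    have "S \<subseteq> H_V n" using S5 n5 by (auto simp: H_V_def)
    moreover have "\<forall>x\<in>S. \<forall>y\<in>S. x \<noteq> y \<longrightarrow> {x, y} \<in> H_E n"
    proof (intro ballI impI)
      fix x y assume "x \<in> S" "y \<in> S" "x \<noteq> y"
      then have "x \<in> {1..5}" "y \<in> {1..5}" "x \<noteq> y" using S5 by auto
      then show "{x, y} \<in> H_E n" unfolding H_E_def
        by (intro UnI1 CollectI exI[of _ x] exI[of _ y]) simp
    qed
    ultimately show "S \<in> cliques (H_V n) (H_E n) b" unfolding cliques_def using cS by simp
  qed
qed

lemma card_cliques: "5 \<le> n \<Longrightarrow> 3 \<le> b \<Longrightarrow> card (cliques (H_V n) (H_E n) b) = 5 choose b"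
  by (simp add: cliques_H n_subsets)

lemma ch: "(5::nat) choose 3 = 10" "(5::nat) choose 4 = 5" "(5::nat) choose 5 = 1"
  by code_simp+

lemma base3: "card (span_trees (H_V 6) (H_E 6) 3) = 34"
  by (simp only: count_H) code_simp

lemma base4: "card (span_trees (H_V 7) (H_E 7) 4) = 102"
  by (simp only: count_H) code_simp

lemma base5: "card (span_trees (H_V 8) (H_E 8) 5) = 211"
  by (simp only: count_H) code_simp

lemma trees3: "6 \<le> n \<Longrightarrow> card (span_trees (H_V n) (H_E n) 3) = n + 28"
  using lin[of 3 n] base3 by simp

lemma trees4: "7 \<le> n \<Longrightarrow> card (span_trees (H_V n) (H_E n) 4) = n + 95"
  using lin[of 4 n] base4 by simp

lemma trees5: "8 \<le> n \<Longrightarrow> card (span_trees (H_V n) (H_E n) 5) = n + 203"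
  using lin[of 5 n] base5 by simp

lemma C3: "6 \<le> n \<Longrightarrow> C_ratio (H_V n) (H_E n) 3 = 30 / (real n + 28)"
  unfolding C_ratio_def using trees3[of n] card_cliques[of n 3] ch by simp

lemma C4: "7 \<le> n \<Longrightarrow> C_ratio (H_V n) (H_E n) 4 = 80 / (real n + 95)"
  unfolding C_ratio_def using trees4[of n] card_cliques[of n 4] ch by simp

lemma C5: "8 \<le> n \<Longrightarrow> C_ratio (H_V n) (H_E n) 5 = 125 / (real n + 203)"
  unfolding C_ratio_def using trees5[of n] card_cliques[of n 5] ch by simp

lemma ineq45: "(x::real) \<ge> 0 \<Longrightarrow> (125 / (x + 203) \<le> 80 / (x + 95) \<longleftrightarrow> x \<le> 97)"
  by (simp add: field_simps)

lemma eq45: "(x::real) \<ge> 0 \<Longrightarrow> (80 / (x + 95) = 125 / (x + 203) \<longleftrightarrow> x = 97)"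
  by (simp add: field_simps)

lemma ineq34: "(x::real) \<ge> 0 \<Longrightarrow> (80 / (x + 95) \<le> 30 / (x + 28) \<longleftrightarrow> x \<le> 12.2)"
  by (simp add: field_simps)

theorem mainTheorem11:
  shows "(\<forall>n::nat. n \<ge> 6 \<longrightarrow> C_ratio (H_V n) (H_E n) 3 = 30 / (real n + 28))
    \<and> (\<forall>n::nat. n \<ge> 7 \<longrightarrow> C_ratio (H_V n) (H_E n) 4 = 80 / (real n + 95))
    \<and> (\<forall>n::nat. n \<ge> 8 \<longrightarrow> C_ratio (H_V n) (H_E n) 5 = 125 / (real n + 203))
    \<and> (\<forall>n::nat. n \<ge> 8 \<longrightarrow>
         (C_ratio (H_V n) (H_E n) 4 \<ge> C_ratio (H_V n) (H_E n) 5 \<longleftrightarrow> n \<le> 97)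
       \<and> (C_ratio (H_V n) (H_E n) 4 = C_ratio (H_V n) (H_E n) 5 \<longleftrightarrow> n = 97))
    \<and> C_ratio (H_V 97) (H_E 97) 4 = 5 / 12
    \<and> C_ratio (H_V 97) (H_E 97) 5 = 5 / 12
    \<and> (\<forall>n::nat. n \<ge> 7 \<longrightarrow>
         (C_ratio (H_V n) (H_E n) 3 \<ge> C_ratio (H_V n) (H_E n) 4 \<longleftrightarrow> n \<le> 12))"
proof (intro conjI allI impI)
  fix n :: nat assume "6 \<le> n" then show "C_ratio (H_V n) (H_E n) 3 = 30 / (real n + 28)" by (rule C3)
next
  fix n :: nat assume "7 \<le> n" then show "C_ratio (H_V n) (H_E n) 4 = 80 / (real n + 95)" by (rule C4)
next
  fix n :: nat assume "8 \<le> n" then show "C_ratio (H_V n) (H_E n) 5 = 125 / (real n + 203)" by (rule C5)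
next
  fix n :: nat assume n: "8 \<le> n"
  have "C_ratio (H_V n) (H_E n) 4 \<ge> C_ratio (H_V n) (H_E n) 5 \<longleftrightarrow> real n \<le> 97"
    using C4[of n] C5[of n] n ineq45[of "real n"] by simp
  also have "\<dots> \<longleftrightarrow> n \<le> 97" by linarith
  finally show "C_ratio (H_V n) (H_E n) 4 \<ge> C_ratio (H_V n) (H_E n) 5 \<longleftrightarrow> n \<le> 97" .
next
  fix n :: nat assume n: "8 \<le> n"
  have "C_ratio (H_V n) (H_E n) 4 = C_ratio (H_V n) (H_E n) 5 \<longleftrightarrow> real n = 97"
    using C4[of n] C5[of n] n eq45[of "real n"] by simp
  also have "\<dots> \<longleftrightarrow> n = 97" by linarith
  finally show "C_ratio (H_V n) (H_E n) 4 = C_ratio (H_V n) (H_E n) 5 \<longleftrightarrow> n = 97" .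
next
  show "C_ratio (H_V 97) (H_E 97) 4 = 5 / 12" using C4[of 97] by simp
next
  show "C_ratio (H_V 97) (H_E 97) 5 = 5 / 12" using C5[of 97] by simp
next
  fix n :: nat assume n: "7 \<le> n"
  have "C_ratio (H_V n) (H_E n) 3 \<ge> C_ratio (H_V n) (H_E n) 4 \<longleftrightarrow> real n \<le> 12.2"
    using C3[of n] C4[of n] n ineq34[of "real n"] by simp
  also have "\<dots> \<longleftrightarrow> n \<le> 12" by linarith
  finally show "C_ratio (H_V n) (H_E n) 3 \<ge> C_ratio (H_V n) (H_E n) 4 \<longleftrightarrow> n \<le> 12" .
qed

end
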